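(* Let $d\ge1$, let $\|\cdot\|$ be a norm on $\mathbb{R}^d$, let $\epsilon\ge0$, and consider either of the following two settings. (i) Least-squares regression: $k=1$, $(X,Y)$ is a random pair in $\mathbb{R}^d\times\mathbb{R}$, $\mathcal{F}$ is a class of functions $\mathbb{R}^d\to\mathbb{R}$, and the loss is $\ell(u,v)=(u-v)^2/2$. (ii) Multiclass classification: $k>1$, $\mathcal{F}$ is a class of functions from $\mathbb{R}^d$ to the unit simplex $\triangle^{k-1}=\{u\in\mathbb{R}^k: u_j\ge0,\ \sum_j u_j=1\}$, $(X,Y)$ is a random pair where $X\in\mathbb{R}^d$ and $Y$ takes values in the set of canonical basis vectors of $\mathbb{R}^k$, and the loss is the Kullback--Leibler divergence $\ell(u,v)=\sum_{j=1}^k v_j\log\frac{v_j}{u_j}$ (with the convention $0\log(0/u)=0$). In either setting, define for $f\in\mathcal{F}$ the mean local smoothness factor $$L_\epsilon(f)=\mathbb{E}\sup_{\Delta:\|\Delta\|\le\epsilon}\|f(X+\Delta)-f(X)\|_1^2.$$ Then for every $f\in\mathcal{F}$, $$R(f)+R_\epsilon(f)\ge\frac16\max\left\{L_\epsilon(f),\ \mathbb{E}\|Y-Y'\|_1^2\right\},$$ where, conditioned on $X$, $Y'$ is independent of $Y$ and has the same conditional distribution as $Y$ given $X$.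
   Context: $R(f)=\mathbb{E}\,\ell(f(X),Y)$ is the standard risk and $R_\epsilon(f)=\mathbb{E}\left(\sup_{\Delta\in\mathbb{R}^d:\|\Delta\|\le\epsilon}\ell(f(X+\Delta),Y)\right)$ is the adversarial risk, with $\ell$ the loss of the respective setting. $\|\cdot\|_1$ is the $\ell_1$ norm on $\mathbb{R}^k$ (for $k=1$, the absolute value). All expectations are assumed well defined (possibly $+\infty$). *)

theory Defs
  imports "HOL-Probability.Probability"
begin

definition is_norm :: "('v::real_vector \<Rightarrow> real) \<Rightarrow> bool" where
  "is_norm N \<longleftrightarrow> (\<forall>x. N x = 0 \<longleftrightarrow> x = 0) \<and> (\<forall>c x. N (c *\<^sub>R x) = \<bar>c\<bar> * N x)
     \<and> (\<forall>x y. N (x + y) \<le> N x + N y)"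

definition l1norm :: "real ^ 'k \<Rightarrow> real" where
  "l1norm u = (\<Sum>j\<in>UNIV. \<bar>u $ j\<bar>)"

definition unit_simplex :: "(real ^ 'k) set" where
  "unit_simplex = {u. (\<forall>j. 0 \<le> u $ j) \<and> (\<Sum>j\<in>UNIV. u $ j) = 1}"

definition basis_vecs :: "(real ^ 'k) set" where
  "basis_vecs = {axis j 1 | j. True}"

definition sq_loss :: "real \<Rightarrow> real \<Rightarrow> ennreal" where
  "sq_loss u v = ennreal ((u - v)\<^sup>2 / 2)"

text \<open>Kullback--Leibler divergence sum_j v_j log(v_j/u_j) with 0 log(0/u) = 0
  and v_j log(v_j/0) = +infinity for v_j > 0.\<close>
definition kl_loss :: "real ^ 'k \<Rightarrow> real ^ 'k \<Rightarrow> ennreal" where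
  "kl_loss u v = (if \<exists>j. 0 < v $ j \<and> u $ j \<le> 0 then \<infinity>
     else ennreal (\<Sum>j\<in>{j. 0 < v $ j}. v $ j * ln (v $ j / u $ j)))"

definition risk :: "'a measure \<Rightarrow> ('a \<Rightarrow> 'x) \<Rightarrow> ('a \<Rightarrow> 'y) \<Rightarrow> ('u \<Rightarrow> 'y \<Rightarrow> ennreal)
    \<Rightarrow> ('x \<Rightarrow> 'u) \<Rightarrow> ennreal" where
  "risk M X Y loss f = (\<integral>\<^sup>+ \<omega>. loss (f (X \<omega>)) (Y \<omega>) \<partial>M)"

definition adv_loss :: "('x::real_vector \<Rightarrow> real) \<Rightarrow> real \<Rightarrow> ('u \<Rightarrow> 'y \<Rightarrow> ennreal)
    \<Rightarrow> ('x \<Rightarrow> 'u) \<Rightarrow> 'x \<Rightarrow> 'y \<Rightarrow> ennreal" where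
  "adv_loss N \<epsilon> loss f x y = (SUP \<Delta>\<in>{\<Delta>. N \<Delta> \<le> \<epsilon>}. loss (f (x + \<Delta>)) y)"

definition adv_risk :: "'a measure \<Rightarrow> ('x::real_vector \<Rightarrow> real) \<Rightarrow> real \<Rightarrow> ('a \<Rightarrow> 'x)
    \<Rightarrow> ('a \<Rightarrow> 'y) \<Rightarrow> ('u \<Rightarrow> 'y \<Rightarrow> ennreal) \<Rightarrow> ('x \<Rightarrow> 'u) \<Rightarrow> ennreal" where
  "adv_risk M N \<epsilon> X Y loss f = (\<integral>\<^sup>+ \<omega>. adv_loss N \<epsilon> loss f (X \<omega>) (Y \<omega>) \<partial>M)"

definition loc_var :: "('x::real_vector \<Rightarrow> real) \<Rightarrow> real \<Rightarrow> ('u::real_vector \<Rightarrow> real)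
    \<Rightarrow> ('x \<Rightarrow> 'u) \<Rightarrow> 'x \<Rightarrow> ennreal" where
  "loc_var N \<epsilon> nrm f x = (SUP \<Delta>\<in>{\<Delta>. N \<Delta> \<le> \<epsilon>}. ennreal ((nrm (f (x + \<Delta>) - f x))\<^sup>2))"

definition smooth_factor :: "'a measure \<Rightarrow> ('x::real_vector \<Rightarrow> real) \<Rightarrow> real
    \<Rightarrow> ('u::real_vector \<Rightarrow> real) \<Rightarrow> ('a \<Rightarrow> 'x) \<Rightarrow> ('x \<Rightarrow> 'u) \<Rightarrow> ennreal" where
  "smooth_factor M N \<epsilon> nrm X f = (\<integral>\<^sup>+ \<omega>. loc_var N \<epsilon> nrm f (X \<omega>) \<partial>M)"

text \<open>Y' is, conditionally on X, an independent copy of Y: there is a Markov kernel K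
  (regular conditional distribution of Y given X) such that the joint law of (X, Y, Y')
  is  P_X(dx) K(x,dy) K(x,dy').\<close>
definition cond_indep_copy :: "'a measure \<Rightarrow> ('a \<Rightarrow> 'x::topological_space)
    \<Rightarrow> ('a \<Rightarrow> 'y::topological_space) \<Rightarrow> ('a \<Rightarrow> 'y) \<Rightarrow> bool" where
  "cond_indep_copy M X Y Y' \<longleftrightarrow> (\<exists>K. K \<in> borel \<rightarrow>\<^sub>M prob_algebra borel \<and>
     distr M (borel \<Otimes>\<^sub>M borel \<Otimes>\<^sub>M borel) (\<lambda>\<omega>. (X \<omega>, Y \<omega>, Y' \<omega>)) =
     distr M borel X \<bind>
       (\<lambda>x. distr (K x \<Otimes>\<^sub>M K x) (borel \<Otimes>\<^sub>M borel \<Otimes>\<^sub>M borel) (\<lambda>(y, y'). (x, y, y'))))"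

end

theory Submission
  imports Defs
begin


lemma prod_int_swap:
  fixes K :: "'y::topological_space measure"
  assumes "prob_space K" "sets K = sets borel" and g: "g \<in> borel_measurable (borel \<Otimes>\<^sub>M borel)"
  shows "(\<integral>\<^sup>+ p. g (x, snd p) \<partial>(K \<Otimes>\<^sub>M K)) = (\<integral>\<^sup>+ p. g (x, fst p) \<partial>(K \<Otimes>\<^sub>M K))"
proof -
  interpret K: prob_space K by fact
  interpret P: pair_sigma_finite K K by unfold_locales
  have gx0: "(\<lambda>y. g (x, y)) \<in> borel_measurable borel"
    using g by measurable
  have gx[measurable]: "(\<lambda>y. g (x, y)) \<in> borel_measurable K"
    using gx0 by (subst measurable_cong_sets[OF assms(2) refl])
  have m1: "(\<lambda>p. g (x, snd p)) \<in> borel_measurable (K \<Otimes>\<^sub>M K)"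
    using gx by measurable
  have m2: "(\<lambda>p. g (x, fst p)) \<in> borel_measurable (K \<Otimes>\<^sub>M K)"
    using gx by measurable
  have "(\<integral>\<^sup>+ p. g (x, snd p) \<partial>(K \<Otimes>\<^sub>M K)) = (\<integral>\<^sup>+ a. \<integral>\<^sup>+ b. g (x, b) \<partial>K \<partial>K)"
    using K.nn_integral_fst[OF m1] by simp
  also have "\<dots> = (\<integral>\<^sup>+ b. g (x, b) \<partial>K)"
    by (simp add: K.emeasure_space_1)
  also have "\<dots> = (\<integral>\<^sup>+ a. \<integral>\<^sup>+ b. g (x, a) \<partial>K \<partial>K)"
    by (simp add: K.emeasure_space_1)
  also have "\<dots> = (\<integral>\<^sup>+ p. g (x, fst p) \<partial>(K \<Otimes>\<^sub>M K))"
    using K.nn_integral_fst[OF m2] by simp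
  finally show ?thesis .
qed

lemma copy_eq:
  fixes X :: "'a \<Rightarrow> 'x::topological_space" and Y Y' :: "'a \<Rightarrow> 'y::topological_space"
  assumes c: "cond_indep_copy M X Y Y'" and [measurable]: "X \<in> borel_measurable M"
    "Y \<in> borel_measurable M" "Y' \<in> borel_measurable M"
    and g[measurable]: "g \<in> borel_measurable (borel \<Otimes>\<^sub>M borel)"
  shows "(\<integral>\<^sup>+\<omega>. g (X \<omega>, Y' \<omega>) \<partial>M) = (\<integral>\<^sup>+\<omega>. g (X \<omega>, Y \<omega>) \<partial>M)"
proof -
  let ?B3 = "borel \<Otimes>\<^sub>M borel \<Otimes>\<^sub>M (borel :: 'y measure)"
  obtain K where K: "K \<in> borel \<rightarrow>\<^sub>M prob_algebra borel" and
    eq: "distr M (borel \<Otimes>\<^sub>M borel \<Otimes>\<^sub>M borel) (\<lambda>\<omega>. (X \<omega>, Y \<omega>, Y' \<omega>)) =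
     distr M borel X \<bind>
       (\<lambda>x. distr (K x \<Otimes>\<^sub>M K x) (borel \<Otimes>\<^sub>M borel \<Otimes>\<^sub>M borel) (\<lambda>(y, y'). (x, y, y')))"
    using c unfolding cond_indep_copy_def by blast
  define Kb where "Kb = (\<lambda>x. distr (K x \<Otimes>\<^sub>M K x) (borel \<Otimes>\<^sub>M borel \<Otimes>\<^sub>M borel) (\<lambda>(y, y'). (x::'x, y::'y, y'::'y)))"
  have Ks[measurable]: "K \<in> borel \<rightarrow>\<^sub>M subprob_algebra borel"
    using K by (rule measurable_prob_algebraD)
  have Kbm: "Kb \<in> borel \<rightarrow>\<^sub>M subprob_algebra (borel \<Otimes>\<^sub>M borel \<Otimes>\<^sub>M borel)"
    unfolding Kb_def
    apply (rule measurable_distr2)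
     apply measurable
    apply (rule measurable_pair_measure; rule Ks)
    done
  have Kbm': "Kb \<in> distr M borel X \<rightarrow>\<^sub>M subprob_algebra (borel \<Otimes>\<^sub>M borel \<Otimes>\<^sub>M borel)"
    unfolding measurable_cong_sets[OF sets_distr refl] by (rule Kbm)
  have gen: "(\<integral>\<^sup>+\<omega>. h (X \<omega>, Y \<omega>, Y' \<omega>) \<partial>M) = (\<integral>\<^sup>+x. \<integral>\<^sup>+t. h t \<partial>Kb x \<partial>distr M borel X)"
    if hm: "h \<in> borel_measurable ?B3" for h
  proof -
    have "(\<integral>\<^sup>+\<omega>. h (X \<omega>, Y \<omega>, Y' \<omega>) \<partial>M) = (\<integral>\<^sup>+t. h t \<partial>distr M ?B3 (\<lambda>\<omega>. (X \<omega>, Y \<omega>, Y' \<omega>)))"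
      by (rule nn_integral_distr[symmetric]) (use hm in auto)
    also have "\<dots> = (\<integral>\<^sup>+t. h t \<partial>(distr M borel X \<bind> Kb))"
      using eq unfolding Kb_def by simp
    also have "\<dots> = (\<integral>\<^sup>+x. \<integral>\<^sup>+t. h t \<partial>Kb x \<partial>distr M borel X)"
      by (rule nn_integral_bind[OF hm Kbm'])
    finally show ?thesis .
  qed
  have inner: "(\<integral>\<^sup>+t. g (fst t, snd (snd t)) \<partial>Kb x) = (\<integral>\<^sup>+t. g (fst t, fst (snd t)) \<partial>Kb x)" for x
  proof -
    have Kx: "K x \<in> space (prob_algebra borel)"
      using K by (auto simp: measurable_def)
    then have ps: "prob_space (K x)" and sK: "sets (K x) = sets borel"
      by (auto simp: space_prob_algebra)
    have mp: "(\<lambda>(y, y'). (x, y, y')) \<in> (K x \<Otimes>\<^sub>M K x) \<rightarrow>\<^sub>M ?B3"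
      unfolding measurable_cong_sets[OF sets_pair_measure_cong[OF sK sK] refl] split_beta'
      by (intro measurable_Pair measurable_const measurable_fst measurable_snd) auto
    have "(\<integral>\<^sup>+t. g (fst t, snd (snd t)) \<partial>Kb x) = (\<integral>\<^sup>+ p. g (x, snd p) \<partial>(K x \<Otimes>\<^sub>M K x))"
      unfolding Kb_def by (subst nn_integral_distr[OF mp]) (auto simp: split_beta)
    also have "\<dots> = (\<integral>\<^sup>+ p. g (x, fst p) \<partial>(K x \<Otimes>\<^sub>M K x))"
      by (rule prod_int_swap[OF ps sK g])
    also have "\<dots> = (\<integral>\<^sup>+t. g (fst t, fst (snd t)) \<partial>Kb x)"
      unfolding Kb_def by (subst nn_integral_distr[OF mp]) (auto simp: split_beta)
    finally show ?thesis .
  qed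
  have "(\<integral>\<^sup>+\<omega>. g (X \<omega>, Y' \<omega>) \<partial>M) = (\<integral>\<^sup>+\<omega>. (\<lambda>t. g (fst t, snd (snd t))) (X \<omega>, Y \<omega>, Y' \<omega>) \<partial>M)"
    by simp
  also have "\<dots> = (\<integral>\<^sup>+x. \<integral>\<^sup>+t. g (fst t, snd (snd t)) \<partial>Kb x \<partial>distr M borel X)"
    by (rule gen) measurable
  also have "\<dots> = (\<integral>\<^sup>+x. \<integral>\<^sup>+t. g (fst t, fst (snd t)) \<partial>Kb x \<partial>distr M borel X)"
    using inner by simp
  also have "\<dots> = (\<integral>\<^sup>+\<omega>. (\<lambda>t. g (fst t, fst (snd t))) (X \<omega>, Y \<omega>, Y' \<omega>) \<partial>M)"
    by (rule gen[symmetric]) measurable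
  finally show ?thesis by simp
qed



lemma vec_nth_meas[measurable]: "(\<lambda>u::real^'k. u $ j) \<in> borel_measurable borel"
  by (intro borel_measurable_continuous_onI continuous_intros)

lemma l1norm_meas: "l1norm \<in> borel_measurable borel"
  unfolding l1norm_def by measurable

lemma l1norm_nn: "0 \<le> l1norm z"
  unfolding l1norm_def by (simp add: sum_nonneg)

lemma l1norm_tri: "l1norm (a + b) \<le> l1norm a + l1norm b"
  unfolding l1norm_def by (simp add: sum.distrib[symmetric] sum_mono abs_triangle_ineq)

lemma l1norm_neg: "l1norm (- z) = l1norm z"
  unfolding l1norm_def by simp

lemma pinsker1:
  fixes t :: real assumes "0 < t" "t \<le> 1"
  shows "2 * (1 - t)\<^sup>2 \<le> - ln t"
proof -
  define \<phi> where "\<phi> = (\<lambda>s::real. - ln s - 2 * (1 - s)\<^sup>2)"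
  have d: "(\<phi> has_real_derivative (- 1 / s + 4 * (1 - s))) (at s)" if "0 < s" for s
    unfolding \<phi>_def using that
    by (auto intro!: derivative_eq_intros simp: field_simps power2_eq_square)
  have "\<phi> 1 \<le> \<phi> t"
  proof (rule DERIV_nonpos_imp_nonincreasing[OF assms(2)])
    fix s assume s: "t \<le> s" "s \<le> 1"
    then have sp: "0 < s" using assms by linarith
    have "- 1 / s + 4 * (1 - s) = - ((2 * s - 1)\<^sup>2) / s"
      using sp by (simp add: field_simps power2_eq_square)
    also have "\<dots> \<le> 0" using sp by (simp add: divide_nonpos_pos)
    finally show "\<exists>y. DERIV \<phi> s :> y \<and> y \<le> 0" using d[OF sp] by blast
  qed
  then show ?thesis unfolding \<phi>_def by simp
qed

lemma kl_bound:
  assumes u: "u \<in> unit_simplex" and y: "y \<in> (basis_vecs :: (real^'k) set)"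
  shows "ennreal ((l1norm (u - y))\<^sup>2) \<le> 2 * kl_loss u y"
proof -
  obtain c where yc: "y = axis c 1" using y unfolding basis_vecs_def by blast
  have u0: "\<And>j. 0 \<le> u $ j" and u1: "(\<Sum>j\<in>UNIV. u $ j) = 1"
    using u unfolding unit_simplex_def by auto
  have pos: "{j. 0 < y $ j} = {c}" unfolding yc by (auto simp: axis_def)
  have "(\<Sum>j\<in>UNIV. u $ j) = u $ c + (\<Sum>j\<in>UNIV - {c}. u $ j)"
    by (simp add: sum.remove)
  then have rest: "(\<Sum>j\<in>UNIV - {c}. u $ j) = 1 - u $ c" using u1 by simp
  have "l1norm (u - y) = (\<Sum>j\<in>UNIV. \<bar>u $ j - y $ j\<bar>)"
    unfolding l1norm_def by simp
  also have "\<dots> = \<bar>u $ c - y $ c\<bar> + (\<Sum>j\<in>UNIV - {c}. \<bar>u $ j - y $ j\<bar>)"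
    by (rule sum.remove) auto
  also have "\<bar>u $ c - y $ c\<bar> = \<bar>u $ c - 1\<bar>" by (simp add: yc)
  also have "(\<Sum>j\<in>UNIV - {c}. \<bar>u $ j - y $ j\<bar>) = (\<Sum>j\<in>UNIV - {c}. u $ j)"
    by (rule sum.cong) (auto simp: yc axis_def u0)
  finally have l1a: "l1norm (u - y) = \<bar>u $ c - 1\<bar> + (\<Sum>j\<in>UNIV - {c}. u $ j)" .
  have uc1: "u $ c \<le> 1"
    using u1 u0 member_le_sum[of c UNIV "\<lambda>j. u $ j"] by simp
  have l1: "l1norm (u - y) = 2 * (1 - u $ c)"
    unfolding l1a rest using uc1 by simp
  show ?thesis
  proof (cases "u $ c \<le> 0")
    case True
    then have "kl_loss u y = \<infinity>" unfolding kl_loss_def using pos by auto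
    then show ?thesis by simp
  next
    case False
    have "kl_loss u y = ennreal (ln (1 / u $ c))"
      unfolding kl_loss_def using pos False by (simp add: yc axis_def)
    moreover have "(l1norm (u - y))\<^sup>2 \<le> 2 * ln (1 / u $ c)"
    proof -
      have a: "(l1norm (u - y))\<^sup>2 = 4 * (1 - u $ c)\<^sup>2" unfolding l1 by (simp add: power2_eq_square algebra_simps)
      have b: "ln (1 / u $ c) = - ln (u $ c)" using False by (simp add: ln_div)
      show ?thesis using pinsker1[of "u $ c"] False uc1 a b by linarith
    qed
    ultimately show ?thesis
    proof -
      assume k: "kl_loss u y = ennreal (ln (1 / u $ c))"
        and l: "(l1norm (u - y))\<^sup>2 \<le> 2 * ln (1 / u $ c)"
      have "ennreal ((l1norm (u - y))\<^sup>2) \<le> ennreal (2 * ln (1 / u $ c))"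
        using l by (rule ennreal_leI)
      also have "\<dots> = 2 * kl_loss u y"
        unfolding k by (subst ennreal_mult') auto
      finally show ?thesis .
    qed
  qed
qed



lemma generic:
  fixes M :: "'a measure" and N :: "'x::euclidean_space \<Rightarrow> real" and X :: "'a \<Rightarrow> 'x"
    and Y Y' :: "'a \<Rightarrow> 'u::euclidean_space" and f :: "'x \<Rightarrow> 'u" and nrm :: "'u \<Rightarrow> real"
    and loss :: "'u \<Rightarrow> 'u \<Rightarrow> ennreal"
  assumes N: "is_norm N" and eps: "0 \<le> \<epsilon>"
    and Xm[measurable]: "X \<in> borel_measurable M" and Ym[measurable]: "Y \<in> borel_measurable M"
    and Y'm[measurable]: "Y' \<in> borel_measurable M" and c: "cond_indep_copy M X Y Y'"
    and fm[measurable]: "f \<in> borel_measurable borel"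
    and Am: "(\<lambda>\<omega>. adv_loss N \<epsilon> loss f (X \<omega>) (Y \<omega>)) \<in> borel_measurable M"
    and Sm: "(\<lambda>\<omega>. loss (f (X \<omega>)) (Y \<omega>)) \<in> borel_measurable M"
    and nn: "\<And>z. 0 \<le> nrm z" and tri: "\<And>a b. nrm (a + b) \<le> nrm a + nrm b"
    and neg: "\<And>z. nrm (- z) = nrm z" and nrmm[measurable]: "nrm \<in> borel_measurable borel"
    and bound: "\<And>\<omega> x. \<omega> \<in> space M \<Longrightarrow> ennreal ((nrm (f x - Y \<omega>))\<^sup>2) \<le> 2 * loss (f x) (Y \<omega>)"
  shows "ennreal (1/6) * max (smooth_factor M N \<epsilon> nrm X f) (\<integral>\<^sup>+ \<omega>. ennreal ((nrm (Y \<omega> - Y' \<omega>))\<^sup>2) \<partial>M)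
     \<le> risk M X Y loss f + adv_risk M N \<epsilon> X Y loss f"
proof -
  define S where "S = (\<lambda>\<omega>. loss (f (X \<omega>)) (Y \<omega>))"
  define A where "A = (\<lambda>\<omega>. adv_loss N \<epsilon> loss f (X \<omega>) (Y \<omega>))"
  define R where "R = risk M X Y loss f"
  define Ra where "Ra = adv_risk M N \<epsilon> X Y loss f"
  have R: "R = (\<integral>\<^sup>+\<omega>. S \<omega> \<partial>M)" unfolding R_def S_def risk_def ..
  have Ra: "Ra = (\<integral>\<^sup>+\<omega>. A \<omega> \<partial>M)" unfolding Ra_def A_def adv_risk_def ..
  have Sm': "S \<in> borel_measurable M" using Sm unfolding S_def .
  have Am': "A \<in> borel_measurable M" using Am unfolding A_def .
  have N0: "N 0 = 0" using N unfolding is_norm_def by blast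
  have advup: "loss (f (x + \<Delta>)) y \<le> adv_loss N \<epsilon> loss f x y" if "N \<Delta> \<le> \<epsilon>" for x y \<Delta>
    unfolding adv_loss_def by (rule SUP_upper) (use that in auto)
  have SA: "S \<omega> \<le> A \<omega>" for \<omega>
    unfolding S_def A_def using advup[of 0] N0 eps by simp
  have sqineq: "(nrm (a - b))\<^sup>2 \<le> 2 * (nrm (a - y))\<^sup>2 + 2 * (nrm (b - y))\<^sup>2" for a b y
  proof -
    have "nrm (a - b) \<le> nrm (a - y) + nrm (- (b - y))"
      using tri[of "a - y" "- (b - y)"] by (simp add: algebra_simps)
    moreover have "nrm (- (b - y)) = nrm (b - y)" by (rule neg)
    ultimately have t: "nrm (a - b) \<le> nrm (a - y) + nrm (b - y)" by simp
    have "(nrm (a - b))\<^sup>2 \<le> (nrm (a - y) + nrm (b - y))\<^sup>2"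
      using t nn by (simp add: power_mono)
    also have "\<dots> \<le> 2 * (nrm (a - y))\<^sup>2 + 2 * (nrm (b - y))\<^sup>2"
    proof -
      have "(nrm (a - y) + nrm (b - y))\<^sup>2 + (nrm (a - y) - nrm (b - y))\<^sup>2
          = 2 * (nrm (a - y))\<^sup>2 + 2 * (nrm (b - y))\<^sup>2"
        by (simp add: power2_eq_square algebra_simps)
      moreover have "0 \<le> (nrm (a - y) - nrm (b - y))\<^sup>2" by simp
      ultimately show ?thesis by linarith
    qed
    finally show ?thesis .
  qed
  have ensq: "ennreal ((nrm (a - b))\<^sup>2) \<le> 2 * ennreal ((nrm (a - y))\<^sup>2) + 2 * ennreal ((nrm (b - y))\<^sup>2)" for a b y
  proof -
    have "ennreal ((nrm (a - b))\<^sup>2) \<le> ennreal (2 * (nrm (a - y))\<^sup>2 + 2 * (nrm (b - y))\<^sup>2)"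
      using sqineq by (rule ennreal_leI)
    also have "\<dots> = 2 * ennreal ((nrm (a - y))\<^sup>2) + 2 * ennreal ((nrm (b - y))\<^sup>2)"
      by (simp add: ennreal_plus[symmetric] ennreal_mult'')
    finally show ?thesis .
  qed
  have LV: "loc_var N \<epsilon> nrm f (X \<omega>) \<le> 4 * S \<omega> + 4 * A \<omega>" if \<omega>: "\<omega> \<in> space M" for \<omega>
    unfolding loc_var_def
  proof (rule SUP_least)
    fix \<Delta> assume "\<Delta> \<in> {\<Delta>. N \<Delta> \<le> \<epsilon>}"
    then have d: "N \<Delta> \<le> \<epsilon>" by simp
    have "ennreal ((nrm (f (X \<omega> + \<Delta>) - f (X \<omega>)))\<^sup>2)
       \<le> 2 * ennreal ((nrm (f (X \<omega> + \<Delta>) - Y \<omega>))\<^sup>2) + 2 * ennreal ((nrm (f (X \<omega>) - Y \<omega>))\<^sup>2)"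
      by (rule ensq)
    also have "\<dots> \<le> 2 * (2 * loss (f (X \<omega> + \<Delta>)) (Y \<omega>)) + 2 * (2 * S \<omega>)"
      unfolding S_def by (intro add_mono mult_left_mono bound \<omega>) auto
    also have "\<dots> \<le> 2 * (2 * A \<omega>) + 2 * (2 * S \<omega>)"
      unfolding A_def by (intro add_mono mult_left_mono advup d) auto
    also have "\<dots> = 4 * S \<omega> + 4 * A \<omega>"
      by (simp add: mult.assoc[symmetric] add.commute)
    finally show "ennreal ((nrm (f (X \<omega> + \<Delta>) - f (X \<omega>)))\<^sup>2) \<le> 4 * S \<omega> + 4 * A \<omega>" .
  qed
  have L: "smooth_factor M N \<epsilon> nrm X f \<le> 4 * R + 4 * Ra"
  proof -
    have "smooth_factor M N \<epsilon> nrm X f \<le> (\<integral>\<^sup>+\<omega>. 4 * S \<omega> + 4 * A \<omega> \<partial>M)"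
      unfolding smooth_factor_def by (rule nn_integral_mono) (rule LV)
    also have "\<dots> = 4 * R + 4 * Ra"
      unfolding R Ra using Sm' Am' by (simp add: nn_integral_add nn_integral_cmult)
    finally show ?thesis .
  qed
  define g where "g = (\<lambda>p :: 'x \<times> 'u. ennreal ((nrm (snd p - f (fst p)))\<^sup>2))"
  have gm: "g \<in> borel_measurable (borel \<Otimes>\<^sub>M borel)" unfolding g_def by measurable
  have gS: "g (X \<omega>, Y \<omega>) \<le> 2 * S \<omega>" if "\<omega> \<in> space M" for \<omega>
  proof -
    have "g (X \<omega>, Y \<omega>) = ennreal ((nrm (f (X \<omega>) - Y \<omega>))\<^sup>2)"
      unfolding g_def using neg[of "f (X \<omega>) - Y \<omega>"] by simp
    also have "\<dots> \<le> 2 * S \<omega>" unfolding S_def by (rule bound[OF that])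
    finally show ?thesis .
  qed
  have E: "(\<integral>\<^sup>+ \<omega>. ennreal ((nrm (Y \<omega> - Y' \<omega>))\<^sup>2) \<partial>M) \<le> 4 * R + 4 * Ra"
  proof -
    have "(\<integral>\<^sup>+ \<omega>. ennreal ((nrm (Y \<omega> - Y' \<omega>))\<^sup>2) \<partial>M)
        \<le> (\<integral>\<^sup>+ \<omega>. 2 * g (X \<omega>, Y \<omega>) + 2 * g (X \<omega>, Y' \<omega>) \<partial>M)"
      unfolding g_def prod.sel by (rule nn_integral_mono) (rule ensq)
    also have "\<dots> = 2 * (\<integral>\<^sup>+ \<omega>. g (X \<omega>, Y \<omega>) \<partial>M) + 2 * (\<integral>\<^sup>+ \<omega>. g (X \<omega>, Y' \<omega>) \<partial>M)"
      using gm by (simp add: nn_integral_add nn_integral_cmult)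
    also have "(\<integral>\<^sup>+ \<omega>. g (X \<omega>, Y' \<omega>) \<partial>M) = (\<integral>\<^sup>+ \<omega>. g (X \<omega>, Y \<omega>) \<partial>M)"
      by (rule copy_eq[OF c Xm Ym Y'm gm])
    finally have e0: "(\<integral>\<^sup>+ \<omega>. ennreal ((nrm (Y \<omega> - Y' \<omega>))\<^sup>2) \<partial>M)
       \<le> 2 * (\<integral>\<^sup>+ \<omega>. g (X \<omega>, Y \<omega>) \<partial>M) + 2 * (\<integral>\<^sup>+ \<omega>. g (X \<omega>, Y \<omega>) \<partial>M)" .
    have G: "(\<integral>\<^sup>+ \<omega>. g (X \<omega>, Y \<omega>) \<partial>M) \<le> 2 * R"
    proof -
      have "(\<integral>\<^sup>+ \<omega>. g (X \<omega>, Y \<omega>) \<partial>M) \<le> (\<integral>\<^sup>+ \<omega>. 2 * S \<omega> \<partial>M)"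
        by (rule nn_integral_mono) (rule gS)
      also have "(\<integral>\<^sup>+ \<omega>. 2 * S \<omega> \<partial>M) = 2 * R"
        unfolding R using Sm' by (simp add: nn_integral_cmult)
      finally show ?thesis .
    qed
    have e1: "(\<integral>\<^sup>+ \<omega>. ennreal ((nrm (Y \<omega> - Y' \<omega>))\<^sup>2) \<partial>M) \<le> 2 * (2 * R) + 2 * (2 * R)"
      using e0 G by (meson add_mono mult_left_mono order_trans zero_le)
    have RRa: "R \<le> Ra" unfolding R Ra by (rule nn_integral_mono) (rule SA)
    have "2 * (2 * R) + 2 * (2 * R) \<le> 4 * R + 4 * Ra"
    proof -
      have "2 * (2 * R) + 2 * (2 * R) = 4 * R + 4 * R" by (simp add: mult.assoc[symmetric])
      also have "\<dots> \<le> 4 * R + 4 * Ra" using RRa by (intro add_mono mult_left_mono) auto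
      finally show ?thesis .
    qed
    then show ?thesis using e1 by (rule order_trans[rotated])
  qed
  have "max (smooth_factor M N \<epsilon> nrm X f) (\<integral>\<^sup>+ \<omega>. ennreal ((nrm (Y \<omega> - Y' \<omega>))\<^sup>2) \<partial>M) \<le> 4 * (R + Ra)"
    using L E by (simp add: distrib_left)
  then have "ennreal (1/6) * max (smooth_factor M N \<epsilon> nrm X f) (\<integral>\<^sup>+ \<omega>. ennreal ((nrm (Y \<omega> - Y' \<omega>))\<^sup>2) \<partial>M)
      \<le> ennreal (1/6) * (4 * (R + Ra))"
    by (rule mult_left_mono) simp
  also have "\<dots> = ennreal (2/3) * (R + Ra)"
  proof -
    have e: "ennreal (1/6) * 4 = ennreal (2/3)"
      using ennreal_mult[of "1/6" 4] by simp
    show ?thesis by (simp only: mult.assoc[symmetric] e)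
  qed
  also have "\<dots> \<le> 1 * (R + Ra)"
    by (intro mult_right_mono) (auto simp: ennreal_le_1)
  finally show ?thesis unfolding R_def Ra_def by simp
qed



lemma kl_eq: "kl_loss a b = (if \<exists>j\<in>UNIV. 0 < b $ j \<and> a $ j \<le> 0 then \<infinity>
   else ennreal (\<Sum>j\<in>UNIV. if 0 < b $ j then b $ j * ln (b $ j / a $ j) else 0))"
  unfolding kl_loss_def using sum.inter_filter[of UNIV "\<lambda>j. b $ j * ln (b $ j / a $ j)" "\<lambda>j. 0 < b $ j"]
  by simp

lemma kl_meas:
  fixes u v :: "'a \<Rightarrow> real ^ 'k"
  assumes [measurable]: "u \<in> borel_measurable M" "v \<in> borel_measurable M"
  shows "(\<lambda>\<omega>. kl_loss (u \<omega>) (v \<omega>)) \<in> borel_measurable M"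
  unfolding kl_eq by measurable

theorem corollary1:
  fixes M :: "'a measure" and N :: "real ^ 'd \<Rightarrow> real" and \<epsilon> :: real
    and X :: "'a \<Rightarrow> real ^ 'd"
  assumes "prob_space M" and "is_norm N" and "0 \<le> \<epsilon>" and "X \<in> borel_measurable M"
  shows
   "(\<forall>(Y :: 'a \<Rightarrow> real) Y' (f :: real ^ 'd \<Rightarrow> real).
       Y \<in> borel_measurable M \<and> Y' \<in> borel_measurable M \<and> cond_indep_copy M X Y Y' \<and>
       f \<in> borel_measurable borel \<and>
       (\<lambda>\<omega>. adv_loss N \<epsilon> sq_loss f (X \<omega>) (Y \<omega>)) \<in> borel_measurable M \<and>
       (\<lambda>\<omega>. loc_var N \<epsilon> abs f (X \<omega>)) \<in> borel_measurable M
     \<longrightarrow> risk M X Y sq_loss f + adv_risk M N \<epsilon> X Y sq_loss f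
         \<ge> ennreal (1/6) * max (smooth_factor M N \<epsilon> abs X f)
                                (\<integral>\<^sup>+ \<omega>. ennreal ((\<bar>Y \<omega> - Y' \<omega>\<bar>)\<^sup>2) \<partial>M))
    \<and>
    (\<forall>(Y :: 'a \<Rightarrow> real ^ 'k) Y' (f :: real ^ 'd \<Rightarrow> real ^ 'k).
       1 < CARD('k) \<and>
       Y \<in> borel_measurable M \<and> Y' \<in> borel_measurable M \<and> cond_indep_copy M X Y Y' \<and>
       (\<forall>\<omega>\<in>space M. Y \<omega> \<in> basis_vecs) \<and>
       f \<in> borel_measurable borel \<and> (\<forall>x. f x \<in> unit_simplex) \<and>
       (\<lambda>\<omega>. adv_loss N \<epsilon> kl_loss f (X \<omega>) (Y \<omega>)) \<in> borel_measurable M \<and>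
       (\<lambda>\<omega>. loc_var N \<epsilon> l1norm f (X \<omega>)) \<in> borel_measurable M
     \<longrightarrow> risk M X Y kl_loss f + adv_risk M N \<epsilon> X Y kl_loss f
         \<ge> ennreal (1/6) * max (smooth_factor M N \<epsilon> l1norm X f)
                                (\<integral>\<^sup>+ \<omega>. ennreal ((l1norm (Y \<omega> - Y' \<omega>))\<^sup>2) \<partial>M))"
  proof (intro conjI allI impI)
  fix Y :: "'a \<Rightarrow> real" and Y' and f :: "real ^ 'd \<Rightarrow> real"
  assume h: "Y \<in> borel_measurable M \<and> Y' \<in> borel_measurable M \<and> cond_indep_copy M X Y Y' \<and>
       f \<in> borel_measurable borel \<and>
       (\<lambda>\<omega>. adv_loss N \<epsilon> sq_loss f (X \<omega>) (Y \<omega>)) \<in> borel_measurable M \<and>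
       (\<lambda>\<omega>. loc_var N \<epsilon> abs f (X \<omega>)) \<in> borel_measurable M"
  then have Ym[measurable]: "Y \<in> borel_measurable M" and fm[measurable]: "f \<in> borel_measurable borel"
    and Y'm: "Y' \<in> borel_measurable M" and c: "cond_indep_copy M X Y Y'"
    and Am: "(\<lambda>\<omega>. adv_loss N \<epsilon> sq_loss f (X \<omega>) (Y \<omega>)) \<in> borel_measurable M"
    by blast+
  have Sm: "(\<lambda>\<omega>. sq_loss (f (X \<omega>)) (Y \<omega>)) \<in> borel_measurable M"
    unfolding sq_loss_def using assms(4) by measurable
  have b: "ennreal ((\<bar>f x - Y \<omega>\<bar>)\<^sup>2) \<le> 2 * sq_loss (f x) (Y \<omega>)" for x \<omega>
  proof -
    have "2 * sq_loss (f x) (Y \<omega>) = ennreal (2 * ((f x - Y \<omega>)\<^sup>2 / 2))"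
      unfolding sq_loss_def by (subst ennreal_mult) auto
    then show ?thesis by simp
  qed
  show "risk M X Y sq_loss f + adv_risk M N \<epsilon> X Y sq_loss f
         \<ge> ennreal (1/6) * max (smooth_factor M N \<epsilon> abs X f)
                                (\<integral>\<^sup>+ \<omega>. ennreal ((\<bar>Y \<omega> - Y' \<omega>\<bar>)\<^sup>2) \<partial>M)"
    by (rule generic[OF assms(2,3,4) Ym Y'm c fm Am Sm _ _ _ _ b]) (auto simp: abs_triangle_ineq)
next
  fix Y :: "'a \<Rightarrow> real ^ 'k" and Y' and f :: "real ^ 'd \<Rightarrow> real ^ 'k"
  assume h: "1 < CARD('k) \<and>
       Y \<in> borel_measurable M \<and> Y' \<in> borel_measurable M \<and> cond_indep_copy M X Y Y' \<and>
       (\<forall>\<omega>\<in>space M. Y \<omega> \<in> basis_vecs) \<and>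
       f \<in> borel_measurable borel \<and> (\<forall>x. f x \<in> unit_simplex) \<and>
       (\<lambda>\<omega>. adv_loss N \<epsilon> kl_loss f (X \<omega>) (Y \<omega>)) \<in> borel_measurable M \<and>
       (\<lambda>\<omega>. loc_var N \<epsilon> l1norm f (X \<omega>)) \<in> borel_measurable M"
  then have Ym[measurable]: "Y \<in> borel_measurable M" and fm[measurable]: "f \<in> borel_measurable borel"
    and Y'm: "Y' \<in> borel_measurable M" and c: "cond_indep_copy M X Y Y'"
    and Am: "(\<lambda>\<omega>. adv_loss N \<epsilon> kl_loss f (X \<omega>) (Y \<omega>)) \<in> borel_measurable M"
    by blast+
  have Sm: "(\<lambda>\<omega>. kl_loss (f (X \<omega>)) (Y \<omega>)) \<in> borel_measurable M"
    by (rule kl_meas) (use assms(4) in measurable)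
  have b: "ennreal ((l1norm (f x - Y \<omega>))\<^sup>2) \<le> 2 * kl_loss (f x) (Y \<omega>)" if "\<omega> \<in> space M" for x \<omega>
    using kl_bound[of "f x" "Y \<omega>"] h that by auto
  show "risk M X Y kl_loss f + adv_risk M N \<epsilon> X Y kl_loss f
         \<ge> ennreal (1/6) * max (smooth_factor M N \<epsilon> l1norm X f)
                                (\<integral>\<^sup>+ \<omega>. ennreal ((l1norm (Y \<omega> - Y' \<omega>))\<^sup>2) \<partial>M)"
    by (rule generic[OF assms(2,3,4) Ym Y'm c fm Am Sm l1norm_nn l1norm_tri l1norm_neg l1norm_meas b])
qed

end
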